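(* Let $(T_t)_{t\ge0}$ be a semigroup of composition operators on $\mathcal{F}^2$ (i.e. $T_tf=f\circ\phi_t$ with $\phi_t$ entire), and suppose it has an analytic extension to the sector $\Sigma_\theta$ for some $0<\theta<\pi/2$. Then for every $\xi\in\Sigma_\theta$ the operator $T_\xi$ is a composition operator.
   Context: $\mathcal{F}^2$ is the Hilbert space of entire functions $f$ with $\|f\|_2^2=\frac{1}{\pi}\int_{\mathbb{C}}|f(z)|^2e^{-|z|^2}\,dm(z)<\infty$. For $0<\theta<\pi/2$, $\Sigma_\theta=\{re^{i\alpha}:r>0,|\alpha|<\theta\}$. An analytic extension of the semigroup to $\Sigma_\theta$ is an analytic map $\xi\mapsto T_\xi$ from $\Sigma_\theta$ to the bounded operators on $\mathcal{F}^2$, agreeing with the semigroup on $(0,\infty)$, satisfying $T_{\xi+\eta}=T_\xi T_\eta$, strongly continuous at $0$ (with $T_0=I$), and with $\sup_{\xi\in\Sigma_\theta,|\xi|<1}\|T_\xi\|<\infty$. *)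

theory Defs
  imports "HOL-Analysis.Analysis"
begin

text \<open>Operators on the Fock space are modelled as maps on functions
  \<open>complex \<Rightarrow> complex\<close>; only their behaviour on \<open>fock2\<close> matters.\<close>

type_synonym op = "(complex \<Rightarrow> complex) \<Rightarrow> (complex \<Rightarrow> complex)"

definition fock_weight :: "(complex \<Rightarrow> complex) \<Rightarrow> complex \<Rightarrow> real" where
  "fock_weight f z = (cmod (f z))\<^sup>2 * exp (- (cmod z)\<^sup>2)"

definition fock2 :: "(complex \<Rightarrow> complex) set" where
  "fock2 = {f. f holomorphic_on UNIV \<and> integrable lborel (fock_weight f)}"

definition fock_norm :: "(complex \<Rightarrow> complex) \<Rightarrow> real" where
  "fock_norm f = sqrt ((1 / pi) * integral\<^sup>L lborel (fock_weight f))"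

definition bdd_op :: "op \<Rightarrow> bool" where
  "bdd_op T \<longleftrightarrow>
     (\<forall>f\<in>fock2. T f \<in> fock2) \<and>
     (\<forall>f\<in>fock2. \<forall>g\<in>fock2. T (\<lambda>z. f z + g z) = (\<lambda>z. T f z + T g z)) \<and>
     (\<forall>f\<in>fock2. \<forall>c::complex. T (\<lambda>z. c * f z) = (\<lambda>z. c * T f z)) \<and>
     (\<exists>C. \<forall>f\<in>fock2. fock_norm (T f) \<le> C * fock_norm f)"

definition op_norm :: "op \<Rightarrow> real" where
  "op_norm T = Sup ((\<lambda>f. fock_norm (T f)) ` {f\<in>fock2. fock_norm f \<le> 1})"

definition is_comp_op :: "op \<Rightarrow> bool" where
  "is_comp_op T \<longleftrightarrow> (\<exists>\<phi>. \<phi> holomorphic_on UNIV \<and> (\<forall>f\<in>fock2. T f = f \<circ> \<phi>))"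

definition comp_semigroup :: "(real \<Rightarrow> op) \<Rightarrow> bool" where
  "comp_semigroup S \<longleftrightarrow>
     (\<forall>t\<ge>0. bdd_op (S t) \<and> is_comp_op (S t)) \<and>
     (\<forall>f\<in>fock2. S 0 f = f) \<and>
     (\<forall>s\<ge>0. \<forall>t\<ge>0. \<forall>f\<in>fock2. S (s + t) f = S s (S t f)) \<and>
     (\<forall>f\<in>fock2. ((\<lambda>t. fock_norm (\<lambda>z. S t f z - f z)) \<longlongrightarrow> 0) (at_right 0))"

definition sector :: "real \<Rightarrow> complex set" where
  "sector \<theta> = {z. z \<noteq> 0 \<and> \<bar>Arg z\<bar> < \<theta>}"

definition op_analytic_on :: "(complex \<Rightarrow> op) \<Rightarrow> complex set \<Rightarrow> bool" where
  "op_analytic_on T A \<longleftrightarrow>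
     (\<forall>\<xi>\<in>A. \<exists>D. bdd_op D \<and>
        ((\<lambda>h. op_norm (\<lambda>f z. T (\<xi> + h) f z - T \<xi> f z - h * D f z) / cmod h) \<longlongrightarrow> 0) (at 0))"

definition analytic_extension :: "(real \<Rightarrow> op) \<Rightarrow> real \<Rightarrow> (complex \<Rightarrow> op) \<Rightarrow> bool" where
  "analytic_extension S \<theta> T \<longleftrightarrow>
     (\<forall>\<xi>\<in>sector \<theta>. bdd_op (T \<xi>)) \<and>
     op_analytic_on T (sector \<theta>) \<and>
     (\<forall>t>0. \<forall>f\<in>fock2. T (complex_of_real t) f = S t f) \<and>
     (\<forall>\<xi>\<in>sector \<theta>. \<forall>\<eta>\<in>sector \<theta>. \<forall>f\<in>fock2. T (\<xi> + \<eta>) f = T \<xi> (T \<eta> f)) \<and>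
     (\<forall>f\<in>fock2. T 0 f = f) \<and>
     (\<forall>f\<in>fock2. ((\<lambda>\<xi>. fock_norm (\<lambda>z. T \<xi> f z - f z)) \<longlongrightarrow> 0) (at 0 within sector \<theta>)) \<and>
     (\<exists>M. \<forall>\<xi>\<in>sector \<theta>. cmod \<xi> < 1 \<longrightarrow> op_norm (T \<xi>) \<le> M)"

end

theory Submission
  imports Defs "HOL-Complex_Analysis.Complex_Analysis" "HOL-Probability.Distributions"
begin

lemma fock_weight_nonneg[simp]: "0 \<le> fock_weight f z"
  by (simp add: fock_weight_def)

lemma fock_weight_meas[measurable]:
  assumes "continuous_on UNIV f"
  shows "fock_weight f \<in> borel_measurable borel"
proof -
  have [measurable]: "f \<in> borel_measurable borel"
    using assms borel_measurable_continuous_onI by blast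
  show ?thesis unfolding fock_weight_def by measurable
qed

lemma fock2_D:
  assumes "f \<in> fock2"
  shows "f holomorphic_on UNIV" "continuous_on UNIV f" "integrable lborel (fock_weight f)"
  using assms holomorphic_on_imp_continuous_on unfolding fock2_def by auto

lemma fock_norm_sq:
  assumes "f \<in> fock2"
  shows "(fock_norm f)^2 = (1/pi) * integral\<^sup>L lborel (fock_weight f)"
proof -
  have "0 \<le> integral\<^sup>L lborel (fock_weight f)" by simp
  then show ?thesis unfolding fock_norm_def by simp
qed

lemma fock_norm_nonneg: "0 \<le> fock_norm f"
  unfolding fock_norm_def by simp

lemma sq3:
  fixes x y w :: real
  assumes "w2 = w^2"
  shows "(x + y + w)^2 \<le> 3 * (x^2 + y^2 + w2)"
proof -
  have e: "3*(x^2+y^2+w^2) - (x+y+w)^2 = (x-y)^2 + (y-w)^2 + (x-w)^2"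
    by (simp add: power2_eq_square algebra_simps)
  have "0 \<le> (x-y)^2 + (y-w)^2 + (x-w)^2" by simp
  then show ?thesis unfolding assms using e by linarith
qed

lemma fock2_lin3:
  assumes f1: "f1 \<in> fock2" and f2: "f2 \<in> fock2" and f3: "f3 \<in> fock2"
  shows "(\<lambda>z. f1 z - f2 z - h * f3 z) \<in> fock2"
    and "(fock_norm (\<lambda>z. f1 z - f2 z - h * f3 z))^2 \<le>
          3 * ((fock_norm f1)^2 + (fock_norm f2)^2 + (cmod h)^2 * (fock_norm f3)^2)"
proof -
  let ?g = "\<lambda>z. f1 z - f2 z - h * f3 z"
  have hol: "?g holomorphic_on UNIV"
    using fock2_D(1)[OF f1] fock2_D(1)[OF f2] fock2_D(1)[OF f3] by (intro holomorphic_intros) auto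
  then have "continuous_on UNIV ?g" using holomorphic_on_imp_continuous_on by blast
  note m = fock_weight_meas[OF this]
  have pw: "fock_weight ?g z \<le> 3 * (fock_weight f1 z + fock_weight f2 z + (cmod h)^2 * fock_weight f3 z)" for z
  proof -
    have "cmod (?g z) \<le> cmod (f1 z) + cmod (f2 z) + cmod h * cmod (f3 z)"
      by (metis (no_types, lifting) add_mono_thms_linordered_semiring(3) norm_diff_ineq norm_mult norm_triangle_ineq4 order_trans)
    then have "(cmod (?g z))^2 \<le> (cmod (f1 z) + cmod (f2 z) + cmod h * cmod (f3 z))^2"
      by (simp add: power_mono)
    also have "\<dots> \<le> 3 * ((cmod (f1 z))^2 + (cmod (f2 z))^2 + (cmod h)^2 * (cmod (f3 z))^2)"
      by (rule sq3) (auto simp: power_mult_distrib)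
    finally have "(cmod (?g z))^2 \<le> 3 * ((cmod (f1 z))^2 + (cmod (f2 z))^2 + (cmod h)^2 * (cmod (f3 z))^2)" .
    then have "(cmod (?g z))^2 * exp (- (cmod z)\<^sup>2) \<le> (3 * ((cmod (f1 z))^2 + (cmod (f2 z))^2 + (cmod h)^2 * (cmod (f3 z))^2)) * exp (- (cmod z)\<^sup>2)"
      by (rule mult_right_mono) simp
    then show ?thesis unfolding fock_weight_def by (simp add: algebra_simps)
  qed
  have int3: "integrable lborel (\<lambda>z. 3 * (fock_weight f1 z + fock_weight f2 z + (cmod h)^2 * fock_weight f3 z))"
    using fock2_D(3)[OF f1] fock2_D(3)[OF f2] fock2_D(3)[OF f3] by auto
  have intg: "integrable lborel (fock_weight ?g)"
    by (rule Bochner_Integration.integrable_bound[OF int3]) (use m pw in auto)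
  show "?g \<in> fock2" using hol intg unfolding fock2_def by auto
  have "integral\<^sup>L lborel (fock_weight ?g) \<le> integral\<^sup>L lborel (\<lambda>z. 3 * (fock_weight f1 z + fock_weight f2 z + (cmod h)^2 * fock_weight f3 z))"
    by (rule integral_mono[OF intg int3]) (use pw in auto)
  also have "\<dots> = 3 * (integral\<^sup>L lborel (fock_weight f1) + integral\<^sup>L lborel (fock_weight f2) + (cmod h)^2 * integral\<^sup>L lborel (fock_weight f3))"
    using fock2_D(3)[OF f1] fock2_D(3)[OF f2] fock2_D(3)[OF f3] by simp
  finally have le: "integral\<^sup>L lborel (fock_weight ?g) \<le> 3 * (integral\<^sup>L lborel (fock_weight f1) + integral\<^sup>L lborel (fock_weight f2) + (cmod h)^2 * integral\<^sup>L lborel (fock_weight f3))" .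
  have "(1/pi) * integral\<^sup>L lborel (fock_weight ?g) \<le> (1/pi) * (3 * (integral\<^sup>L lborel (fock_weight f1) + integral\<^sup>L lborel (fock_weight f2) + (cmod h)^2 * integral\<^sup>L lborel (fock_weight f3)))"
    by (rule mult_left_mono[OF le]) simp
  also have "\<dots> = 3 * ((1/pi) * integral\<^sup>L lborel (fock_weight f1) + (1/pi) * integral\<^sup>L lborel (fock_weight f2) + (cmod h)^2 * ((1/pi) * integral\<^sup>L lborel (fock_weight f3)))"
    by (simp add: algebra_simps)
  finally show "(fock_norm ?g)^2 \<le> 3 * ((fock_norm f1)^2 + (fock_norm f2)^2 + (cmod h)^2 * (fock_norm f3)^2)"
    unfolding fock_norm_sq[OF \<open>?g \<in> fock2\<close>] fock_norm_sq[OF f1] fock_norm_sq[OF f2] fock_norm_sq[OF f3] .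
qed

lemma fock2_scale:
  assumes f: "f \<in> fock2"
  shows "(\<lambda>z. c * f z) \<in> fock2" and "fock_norm (\<lambda>z. c * f z) = cmod c * fock_norm f"
proof -
  have hol: "(\<lambda>z. c * f z) holomorphic_on UNIV"
    using fock2_D(1)[OF f] by (intro holomorphic_intros) auto
  have eq: "fock_weight (\<lambda>z. c * f z) = (\<lambda>z. (cmod c)^2 * fock_weight f z)"
    by (auto simp: fock_weight_def norm_mult power_mult_distrib)
  show "(\<lambda>z. c * f z) \<in> fock2" using hol fock2_D(3)[OF f] unfolding fock2_def by (simp add: eq)
  show "fock_norm (\<lambda>z. c * f z) = cmod c * fock_norm f"
  proof -
    let ?I = "integral\<^sup>L lborel (fock_weight f)"
    have 1: "integral\<^sup>L lborel (\<lambda>z. (cmod c)^2 * fock_weight f z) = (cmod c)^2 * ?I"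
      by simp
    have 2: "1/pi * ((cmod c)^2 * ?I) = (cmod c)^2 * (1/pi * ?I)" by simp
    have "sqrt (1/pi * integral\<^sup>L lborel (\<lambda>z. (cmod c)^2 * fock_weight f z)) =
       cmod c * sqrt (1/pi * ?I)"
      unfolding 1 2 by (simp only: real_sqrt_mult real_sqrt_abs abs_norm_cancel)
    then show ?thesis unfolding fock_norm_def eq .
  qed
qed


lemma gauss_p_int: "integrable lborel (\<lambda>t::real. (1 + t^2) * exp (-(t^2)/2))"
proof -
  have "integrable lborel (\<lambda>t. sqrt (2*pi) * (std_normal_density t + std_normal_density t * t^2))"
    using integrable_std_normal_moment[of 2] by auto
  moreover have "(\<lambda>t. sqrt (2*pi) * (std_normal_density t + std_normal_density t * t^2)) =
     (\<lambda>t::real. (1 + t^2) * exp (-(t^2)/2))"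
    by (auto simp: std_normal_density_def field_simps)
  ultimately show ?thesis by simp
qed

lemma gauss_p_nn: "(\<integral>\<^sup>+t. ennreal ((1 + t^2) * exp (-(t^2)/2)) \<partial>lborel) < \<infinity>"
  by (subst nn_integral_eq_integral[OF gauss_p_int]) auto

lemma id_fock2: "(\<lambda>z. z) \<in> fock2"
proof -
  let ?p = "\<lambda>t::real. (1 + t^2) * exp (-(t^2)/2)"
  have pw: "fock_weight (\<lambda>z. z) z \<le> ?p (Re z) * ?p (Im z)" for z
  proof -
    have a: "(cmod z)^2 = (Re z)^2 + (Im z)^2" by (simp add: cmod_power2)
    have "exp (- ((cmod z)^2)) \<le> exp (-((Re z)^2)/2) * exp (-((Im z)^2)/2)"
      unfolding a by (simp flip: exp_add add: field_simps)
    moreover have "(Re z)^2 + (Im z)^2 \<le> (1 + (Re z)^2) * (1 + (Im z)^2)"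
      by (simp add: algebra_simps)
    ultimately have "((Re z)^2 + (Im z)^2) * exp (- ((cmod z)^2)) \<le>
        ((1 + (Re z)^2) * (1 + (Im z)^2)) * (exp (-((Re z)^2)/2) * exp (-((Im z)^2)/2))"
      by (intro mult_mono) auto
    then show ?thesis unfolding fock_weight_def a by (simp add: algebra_simps)
  qed
  have "(\<integral>\<^sup>+z. ennreal (fock_weight (\<lambda>z. z) z) \<partial>lborel)
      \<le> (\<integral>\<^sup>+z. (\<Prod>b\<in>Basis. ennreal (?p ((z::complex) \<bullet> b))) \<partial>lborel)"
  proof (rule nn_integral_mono)
    fix z :: complex
    have "(\<Prod>b\<in>Basis. ennreal (?p (z \<bullet> b))) = ennreal (?p (Re z) * ?p (Im z))"
      by (simp add: Basis_complex_def ennreal_mult')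
    then show "ennreal (fock_weight (\<lambda>z. z) z) \<le> (\<Prod>b\<in>Basis. ennreal (?p (z \<bullet> b)))"
      using pw[of z] by (simp add: ennreal_leI)
  qed
  also have "\<dots> = (\<Prod>b\<in>(Basis::complex set). (\<integral>\<^sup>+t. ennreal (?p t) \<partial>lborel))"
    by (rule nn_integral_lborel_prod) auto
  also have "\<dots> < \<infinity>"
    using gauss_p_nn by (simp add: Basis_complex_def ennreal_mult_less_top)
  finally have fin: "(\<integral>\<^sup>+z. ennreal (fock_weight (\<lambda>z. z) z) \<partial>lborel) < \<infinity>" .
  have "integrable lborel (fock_weight (\<lambda>z. z))"
    apply (rule integrableI_nonneg)
    using fock_weight_meas[of "\<lambda>z. z"] fin by (auto simp: measurable_lborel1)
  then show ?thesis unfolding fock2_def by auto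
qed


lemma circle_bound:
  fixes g :: "complex \<Rightarrow> complex"
  assumes hol: "g holomorphic_on UNIV" and cz: "cmod (c - z0) \<le> 1/2"
  shows "cmod (g z0) \<le> 2 * integral {0..1} (\<lambda>t. cmod (g (c + exp (2 * of_real pi * \<i> * of_real t))))"
proof -
  let ?e = "\<lambda>t::real. exp (2 * of_real pi * \<i> * of_real t)"
  have cont: "continuous_on UNIV g" using hol holomorphic_on_imp_continuous_on by blast
  have "((\<lambda>u. g u/(u - z0)) has_contour_integral (2 * of_real pi * \<i> * g z0)) (circlepath c 1)"
    by (rule Cauchy_integral_circlepath)
       (use cont hol cz in \<open>auto intro: continuous_on_subset holomorphic_on_subset simp: norm_minus_commute\<close>)
  then have hi: "((\<lambda>x. g (circlepath c 1 x)/(circlepath c 1 x - z0) * vector_derivative (circlepath c 1) (at x within {0..1}))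
      has_integral (2 * of_real pi * \<i> * g z0)) {0..1}"
    unfolding has_contour_integral_def .
  let ?F = "\<lambda>x. g (circlepath c 1 x)/(circlepath c 1 x - z0) * vector_derivative (circlepath c 1) (at x within {0..1})"
  let ?G = "\<lambda>t. 4 * pi * cmod (g (c + ?e t))"
  have bnd: "cmod (?F x) \<le> ?G x" if x: "x \<in> {0..1}" for x
  proof -
    have vd: "vector_derivative (circlepath c 1) (at x within {0..1}) = 2 * pi * \<i> * ?e x"
      using x by (simp add: vector_derivative_circlepath01)
    have ne: "cmod (?e x) = 1" by (simp add: norm_exp)
    have cp: "circlepath c 1 x = c + ?e x" by (simp add: circlepath)
    have "?e x = (c + ?e x - z0) - (c - z0)" by simp
    then have "cmod (?e x) \<le> cmod (c + ?e x - z0) + cmod (c - z0)"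
      by (metis norm_triangle_ineq4)
    then have d: "1/2 \<le> cmod (c + ?e x - z0)" using ne cz by linarith
    have "cmod (?F x) = cmod (g (c + ?e x)) / cmod (c + ?e x - z0) * (2 * pi)"
      unfolding vd cp by (simp add: norm_mult norm_divide ne)
    also have "\<dots> \<le> cmod (g (c + ?e x)) / (1/2) * (2 * pi)"
      using d by (intro mult_right_mono divide_left_mono d) auto
    also have "\<dots> = ?G x" by simp
    finally show ?thesis .
  qed
  have contG: "continuous_on {0..1} (\<lambda>t. cmod (g (c + ?e t)))"
    by (intro continuous_intros continuous_on_compose2[OF cont]) auto
  have "cmod (integral {0..1} ?F) \<le> integral {0..1} ?G"
    by (rule integral_norm_bound_integral)
       (use hi contG bnd in \<open>auto intro!: integrable_continuous_interval continuous_intros simp: has_integral_integrable\<close>)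
  moreover have "integral {0..1} ?F = 2 * of_real pi * \<i> * g z0" using hi by (rule integral_unique)
  moreover have "integral {0..1} ?G = 4 * pi * integral {0..1} (\<lambda>t. cmod (g (c + ?e t)))"
    by simp
  ultimately have "2 * pi * cmod (g z0) \<le> 4 * pi * integral {0..1} (\<lambda>t. cmod (g (c + ?e t)))"
    by (simp add: norm_mult)
  then show ?thesis by (simp add: pi_gt_zero)
qed


lemma pe_step1:
  assumes g: "g \<in> fock2" and cz: "cmod (c - z0) \<le> 1/2" and ep: "0 < \<epsilon>"
  shows "ennreal (\<epsilon> * cmod (g z0)) \<le> ennreal (\<epsilon>^2) +
    (\<integral>\<^sup>+t. ennreal ((cmod (g (c + exp (2 * of_real pi * \<i> * of_real t))))^2) * indicator {0..1} t \<partial>lborel)"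
proof -
  let ?h = "\<lambda>t::real. cmod (g (c + exp (2 * of_real pi * \<i> * of_real t)))"
  have hol: "g holomorphic_on UNIV" and cont: "continuous_on UNIV g" using fock2_D[OF g] by auto
  have "continuous_on {0..1} (\<lambda>t::real. c + exp (2 * of_real pi * \<i> * of_real t))"
    by (intro continuous_intros)
  then have "continuous_on {0..1} (\<lambda>t::real. g (c + exp (2 * of_real pi * \<i> * of_real t)))"
    by (rule continuous_on_compose2[OF cont]) auto
  then have ch: "continuous_on {0..1} ?h"
    by (rule continuous_on_norm)
  have ch2: "continuous_on {0..1} (\<lambda>t. (?h t)^2)" using ch by (rule continuous_on_power)
  have i1: "?h integrable_on {0..1}" using ch integrable_continuous_interval by blast
  have i2: "(\<lambda>t. (?h t)^2) integrable_on {0..1}" using ch2 integrable_continuous_interval by blast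
  have i3: "(\<lambda>t. 2 * \<epsilon> * ?h t) integrable_on {0..1}" using integrable_on_cmult_left[OF i1] by simp
  have i4: "(\<lambda>t. \<epsilon>^2 + (?h t)^2) integrable_on {0..1}"
    by (intro integrable_add i2 integrable_const_ivl)
  have "\<epsilon> * cmod (g z0) \<le> \<epsilon> * (2 * integral {0..1} ?h)"
    using circle_bound[OF hol cz] ep by (intro mult_left_mono) auto
  also have "\<dots> = integral {0..1} (\<lambda>t. 2 * \<epsilon> * ?h t)" by simp
  also have "\<dots> \<le> integral {0..1} (\<lambda>t. \<epsilon>^2 + (?h t)^2)"
  proof (rule integral_le[OF i3 i4])
    fix t
    have "(\<epsilon> - ?h t)^2 = \<epsilon>^2 + (?h t)^2 - 2 * \<epsilon> * ?h t" by (simp add: power2_diff)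
    moreover have "0 \<le> (\<epsilon> - ?h t)^2" by simp
    ultimately show "2 * \<epsilon> * ?h t \<le> \<epsilon>^2 + (?h t)^2" by linarith
  qed
  also have "\<dots> = integral {0..1} (\<lambda>t::real. \<epsilon>^2) + integral {0..1} (\<lambda>t. (?h t)^2)"
    by (rule integral_add[OF integrable_const_ivl i2])
  also have "integral {0..1} (\<lambda>t::real. \<epsilon>^2) = \<epsilon>^2" by simp
  finally have r: "\<epsilon> * cmod (g z0) \<le> \<epsilon>^2 + integral {0..1} (\<lambda>t. (?h t)^2)" .
  have nn: "(\<integral>\<^sup>+t. ennreal ((?h t)^2) * indicator {0..1} t \<partial>lborel) = ennreal (integral {0..1} (\<lambda>t. (?h t)^2))"
    by (rule nn_integral_has_integral_lebesgue') (use i2 in \<open>auto simp: integrable_integral\<close>)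
  have nonneg: "0 \<le> integral {0..1} (\<lambda>t. (?h t)^2)"
    by (rule Henstock_Kurzweil_Integration.integral_nonneg[OF i2]) auto
  have "ennreal (\<epsilon> * cmod (g z0)) \<le> ennreal (\<epsilon>^2 + integral {0..1} (\<lambda>t. (?h t)^2))"
    using r by (rule ennreal_leI)
  also have "\<dots> = ennreal (\<epsilon>^2) + ennreal (integral {0..1} (\<lambda>t. (?h t)^2))"
    using nonneg by (simp add: ennreal_plus)
  finally show ?thesis unfolding nn .
qed

lemma nn_integral_translate:
  fixes f :: "'a::euclidean_space \<Rightarrow> ennreal"
  assumes [measurable]: "f \<in> borel_measurable borel"
  shows "(\<integral>\<^sup>+c. f (a + c) \<partial>lborel) = (\<integral>\<^sup>+w. f w \<partial>lborel)"
proof -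
  have "(\<integral>\<^sup>+w. f w \<partial>lborel) = (\<integral>\<^sup>+w. f w \<partial>(distr lborel borel ((+) a)))"
    by (simp add: lborel_distr_plus)
  also have "\<dots> = (\<integral>\<^sup>+c. f (a + c) \<partial>lborel)"
    by (subst nn_integral_distr) auto
  finally show ?thesis ..
qed

lemma pe_bound:
  assumes g: "g \<in> fock2" and ep: "0 < \<epsilon>"
  shows "\<epsilon> * cmod (g z0) \<le> \<epsilon>^2 + 4 * exp ((cmod z0 + 2)^2) * integral\<^sup>L lborel (fock_weight g)"
proof -
  let ?e = "\<lambda>t::real. exp (2 * of_real pi * \<i> * of_real t)"
  let ?R = "cmod z0 + 2"
  let ?I = "integral\<^sup>L lborel (fock_weight g)"
  define a :: complex where "a = (1 + \<i>)/4"
  define Q where "Q = cbox (z0 - a) (z0 + a)"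
  define F where "F = (\<lambda>t c. ennreal ((cmod (g (c + ?e t)))^2) * indicator {0..1} t * indicator Q c)"
  have cont: "continuous_on UNIV g" using fock2_D[OF g] by auto
  have Qb[measurable]: "Q \<in> sets borel" unfolding Q_def by simp
  have muQ: "emeasure lborel Q = ennreal (1/4)"
    unfolding Q_def a_def by (subst emeasure_lborel_cbox) (auto simp: Basis_complex_def)
  have Qn: "cmod (c - z0) \<le> 1/2" if "c \<in> Q" for c
  proof -
    from that have r: "Re z0 - 1/4 \<le> Re c" "Re c \<le> Re z0 + 1/4" "Im z0 - 1/4 \<le> Im c" "Im c \<le> Im z0 + 1/4"
      unfolding Q_def a_def in_cbox_complex_iff by auto
    have "\<bar>Re (c - z0)\<bar> \<le> 1/4" "\<bar>Im (c - z0)\<bar> \<le> 1/4"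
      using r unfolding minus_complex.sel by (intro abs_leI; linarith)+
    then show ?thesis using cmod_le[of "c - z0"] by linarith
  qed
  have contp: "continuous_on UNIV (\<lambda>p::real \<times> complex. (cmod (g (snd p + ?e (fst p))))^2)"
  proof -
    have "continuous_on UNIV (\<lambda>p::real \<times> complex. snd p + ?e (fst p))"
      by (intro continuous_intros)
    then have "continuous_on UNIV (\<lambda>p::real \<times> complex. g (snd p + ?e (fst p)))"
      by (rule continuous_on_compose2[OF cont]) auto
    then show ?thesis by (intro continuous_intros)
  qed
  have mp[measurable]: "(\<lambda>p::real \<times> complex. (cmod (g (snd p + ?e (fst p))))^2) \<in> borel_measurable borel"
    using contp by (rule borel_measurable_continuous_onI)
  have mp2[measurable]: "(\<lambda>p::real \<times> complex. (cmod (g (snd p + ?e (fst p))))^2) \<in> borel_measurable (lborel \<Otimes>\<^sub>M lborel)"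
    using mp by (simp add: lborel_prod measurable_lborel1)
  have Ql[measurable]: "Q \<in> sets lborel" by simp
  have Fm: "case_prod F \<in> borel_measurable (lborel \<Otimes>\<^sub>M lborel)"
  proof -
    have "(\<lambda>p::real \<times> complex. ennreal ((cmod (g (snd p + ?e (fst p))))^2) * indicator {0..1} (fst p) * indicator Q (snd p))
       \<in> borel_measurable (lborel \<Otimes>\<^sub>M lborel)" by measurable
    moreover have "case_prod F = (\<lambda>p::real \<times> complex. ennreal ((cmod (g (snd p + ?e (fst p))))^2) * indicator {0..1} (fst p) * indicator Q (snd p))"
      unfolding F_def by auto
    ultimately show ?thesis by simp
  qed
  have step: "ennreal (\<epsilon> * cmod (g z0)) * indicator Q c \<le> (ennreal (\<epsilon>^2) + (\<integral>\<^sup>+t. F t c \<partial>lborel)) * indicator Q c" for c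
  proof (cases "c \<in> Q")
    case True
    have "(\<integral>\<^sup>+t. F t c \<partial>lborel) = (\<integral>\<^sup>+t. ennreal ((cmod (g (c + ?e t)))^2) * indicator {0..1} t \<partial>lborel)"
      unfolding F_def using True by simp
    then show ?thesis using pe_step1[OF g Qn[OF True] ep] True by simp
  qed simp
  have Fm': "(\<lambda>(c,t). F t c) \<in> borel_measurable (lborel \<Otimes>\<^sub>M lborel)"
  proof -
    have "(\<lambda>(x,y). case_prod F (y,x)) \<in> borel_measurable (lborel \<Otimes>\<^sub>M lborel)"
      using Fm by (rule measurable_pair_swap)
    moreover have "(\<lambda>(x,y). case_prod F (y,x)) = (\<lambda>(c,t). F t c)" by auto
    ultimately show ?thesis by simp
  qed
  have Im: "(\<lambda>c. \<integral>\<^sup>+t. F t c \<partial>lborel) \<in> borel_measurable lborel"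
    using lborel.borel_measurable_nn_integral[OF Fm'] .
  have D0: "(\<integral>\<^sup>+c. (\<integral>\<^sup>+t. F t c \<partial>lborel) \<partial>lborel) = (\<integral>\<^sup>+t. (\<integral>\<^sup>+c. F t c \<partial>lborel) \<partial>lborel)"
    using lborel_pair.Fubini'[OF Fm] .
  also have "\<dots> \<le> (\<integral>\<^sup>+t. ennreal (exp (?R^2) * ?I) * indicator {0..1::real} t \<partial>lborel)"
  proof (rule nn_integral_mono)
    fix t :: real
    show "(\<integral>\<^sup>+c. F t c \<partial>lborel) \<le> ennreal (exp (?R^2) * ?I) * indicator {0..1} t"
    proof (cases "t \<in> {0..1}")
      case False then show ?thesis by (simp add: F_def)
    next
      case True
      have "(\<integral>\<^sup>+c. F t c \<partial>lborel) \<le> (\<integral>\<^sup>+c. ennreal (exp (?R^2)) * ennreal (fock_weight g (?e t + c)) \<partial>lborel)"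
      proof (rule nn_integral_mono)
        fix c
        show "F t c \<le> ennreal (exp (?R^2)) * ennreal (fock_weight g (?e t + c))"
        proof (cases "c \<in> Q")
          case False then show ?thesis by (simp add: F_def)
        next
          case cQ: True
          have t1: "cmod (z0 + (c - z0) + ?e t) \<le> cmod (z0 + (c - z0)) + cmod (?e t)"
            by (rule norm_triangle_ineq)
          have t2: "cmod (z0 + (c - z0)) \<le> cmod z0 + cmod (c - z0)" by (rule norm_triangle_ineq)
          have "cmod (c + ?e t) \<le> cmod z0 + cmod (c - z0) + cmod (?e t)"
            using t1 t2 by simp
          also have "\<dots> \<le> ?R" using Qn[OF cQ] by (simp add: norm_exp)
          finally have n: "cmod (c + ?e t) \<le> ?R" .
          then have "(cmod (c + ?e t))^2 \<le> ?R^2" by (simp add: power_mono)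
          then have "1 \<le> exp (?R^2) * exp (- ((cmod (c + ?e t))^2))"
            by (simp flip: exp_add)
          then have "(cmod (g (c + ?e t)))^2 * 1 \<le> (cmod (g (c + ?e t)))^2 * (exp (?R^2) * exp (- ((cmod (c + ?e t))^2)))"
            by (rule mult_left_mono) simp
          then have "(cmod (g (c + ?e t)))^2 \<le> exp (?R^2) * ((cmod (g (c + ?e t)))^2 * exp (- ((cmod (c + ?e t))^2)))"
            by (simp add: algebra_simps)
          then show ?thesis using True cQ
            by (simp add: F_def fock_weight_def add.commute ennreal_mult'[symmetric] ennreal_leI)
        qed
      qed
      also have "\<dots> = ennreal (exp (?R^2)) * (\<integral>\<^sup>+c. ennreal (fock_weight g (?e t + c)) \<partial>lborel)"
        by (rule nn_integral_cmult) (use cont in \<open>auto intro: measurable_compose[OF _ fock_weight_meas]\<close>)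
      also have "(\<integral>\<^sup>+c. ennreal (fock_weight g (?e t + c)) \<partial>lborel) = (\<integral>\<^sup>+w. ennreal (fock_weight g w) \<partial>lborel)"
        by (rule nn_integral_translate) (use fock_weight_meas[OF cont] in measurable)
      also have "\<dots> = ennreal ?I"
        by (rule nn_integral_eq_integral) (use fock2_D(3)[OF g] in auto)
      finally show ?thesis using True by (simp add: ennreal_mult')
    qed
  qed
  also have "\<dots> = ennreal (exp (?R^2) * ?I)"
    by (simp add: nn_integral_cmult_indicator)
  finally have D: "(\<integral>\<^sup>+c. (\<integral>\<^sup>+t. F t c \<partial>lborel) \<partial>lborel) \<le> ennreal (exp (?R^2) * ?I)" .
  have "ennreal (\<epsilon> * cmod (g z0)) * ennreal (1/4) = (\<integral>\<^sup>+c. ennreal (\<epsilon> * cmod (g z0)) * indicator Q c \<partial>lborel)"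
    using Qb by (simp add: nn_integral_cmult_indicator muQ)
  also have "\<dots> \<le> (\<integral>\<^sup>+c. (ennreal (\<epsilon>^2) + (\<integral>\<^sup>+t. F t c \<partial>lborel)) * indicator Q c \<partial>lborel)"
    by (rule nn_integral_mono) (rule step)
  also have "\<dots> = (\<integral>\<^sup>+c. ennreal (\<epsilon>^2) * indicator Q c + (\<integral>\<^sup>+t. F t c \<partial>lborel) \<partial>lborel)"
  proof (rule nn_integral_cong)
    fix c
    show "(ennreal (\<epsilon>^2) + (\<integral>\<^sup>+t. F t c \<partial>lborel)) * indicator Q c = ennreal (\<epsilon>^2) * indicator Q c + (\<integral>\<^sup>+t. F t c \<partial>lborel)"
      by (cases "c \<in> Q") (auto simp: F_def)
  qed
  also have "\<dots> = (\<integral>\<^sup>+c. ennreal (\<epsilon>^2) * indicator Q c \<partial>lborel) + (\<integral>\<^sup>+c. (\<integral>\<^sup>+t. F t c \<partial>lborel) \<partial>lborel)"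
    by (rule nn_integral_add[OF _ Im]) measurable
  also have "\<dots> = ennreal (\<epsilon>^2) * ennreal (1/4) + (\<integral>\<^sup>+c. (\<integral>\<^sup>+t. F t c \<partial>lborel) \<partial>lborel)"
    using Qb by (simp add: nn_integral_cmult_indicator muQ)
  also have "\<dots> \<le> ennreal (\<epsilon>^2) * ennreal (1/4) + ennreal (exp (?R^2) * ?I)"
    using D by (rule add_left_mono)
  finally have fin: "ennreal (\<epsilon> * cmod (g z0)) * ennreal (1/4) \<le> ennreal (\<epsilon>^2) * ennreal (1/4) + ennreal (exp (?R^2) * ?I)" .
  have I0: "0 \<le> ?I" by simp
  have e1: "ennreal (\<epsilon> * cmod (g z0)) * ennreal (1/4) = ennreal (\<epsilon> * cmod (g z0) * (1/4))"
    by (rule ennreal_mult[symmetric]) (use ep in auto)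
  have e2: "ennreal (\<epsilon>^2) * ennreal (1/4) = ennreal (\<epsilon>^2 * (1/4))"
    by (rule ennreal_mult[symmetric]) auto
  have e3: "ennreal (\<epsilon>^2 * (1/4)) + ennreal (exp (?R^2) * ?I) = ennreal (\<epsilon>^2 * (1/4) + exp (?R^2) * ?I)"
    by (rule ennreal_plus[symmetric]) (use I0 in auto)
  have "ennreal (\<epsilon> * cmod (g z0) * (1/4)) \<le> ennreal (\<epsilon>^2 * (1/4) + exp (?R^2) * ?I)"
    using fin unfolding e1 e2 e3 .
  then have "\<epsilon> * cmod (g z0) * (1/4) \<le> \<epsilon>^2 * (1/4) + exp (?R^2) * ?I"
    using I0 by (subst (asm) ennreal_le_iff) auto
  then show ?thesis by simp
qed


lemma point_eval:
  assumes g: "g \<in> fock2"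
  shows "cmod (g z0) \<le> (4 * sqrt (pi * exp ((cmod z0 + 2)^2))) * fock_norm g"
proof -
  define E where "E = exp ((cmod z0 + 2)^2)"
  define N where "N = fock_norm g"
  define A where "A = 4 * E * integral\<^sup>L lborel (fock_weight g)"
  have N0: "0 \<le> N" unfolding N_def by (rule fock_norm_nonneg)
  have E0: "0 < E" unfolding E_def by simp
  have IA: "integral\<^sup>L lborel (fock_weight g) = pi * N^2"
    using fock_norm_sq[OF g] unfolding N_def by simp
  have A0: "0 \<le> A" unfolding A_def using E0 by simp
  have pb: "\<epsilon> * cmod (g z0) \<le> \<epsilon>^2 + A" if "0 < \<epsilon>" for \<epsilon>
    using pe_bound[OF g that, of z0] unfolding A_def E_def by simp
  have main: "cmod (g z0) \<le> 2 * sqrt A"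
  proof (cases "A > 0")
    case True
    then have s: "0 < sqrt A" by simp
    have "sqrt A * cmod (g z0) \<le> (sqrt A)^2 + A" using pb[OF s] .
    also have "\<dots> = sqrt A * (2 * sqrt A)" using A0 by (simp add: power2_eq_square)
    finally show ?thesis using s by (simp add: mult_le_cancel_left_pos)
  next
    case False
    then have "A = 0" using A0 by simp
    show ?thesis
    proof (rule ccontr)
      assume "\<not> ?thesis"
      then have p: "0 < cmod (g z0)" using \<open>A = 0\<close> by simp
      have "cmod (g z0) / 2 * cmod (g z0) \<le> (cmod (g z0) / 2)^2 + A" using pb[of "cmod (g z0) / 2"] p by simp
      moreover have "(cmod (g z0) / 2)^2 = cmod (g z0) / 2 * cmod (g z0) / 2" by (simp add: power2_eq_square)
      moreover have "0 < cmod (g z0) / 2 * cmod (g z0)" using p by simp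
      ultimately show False using \<open>A = 0\<close> by linarith
    qed
  qed
  have "A = (2 * N)^2 * (pi * E)" unfolding A_def IA by (simp add: power2_eq_square)
  then have "sqrt A = 2 * N * sqrt (pi * E)"
    using N0 by (simp add: real_sqrt_mult)
  then show ?thesis using main unfolding N_def E_def by (simp add: ac_simps)
qed

lemma sector_Re_pos:
  assumes "z \<in> sector \<theta>" "\<theta> \<le> pi/2"
  shows "0 < Re z"
proof -
  have z: "z \<noteq> 0" "\<bar>Arg z\<bar> < \<theta>" using assms unfolding sector_def by auto
  have "Re z = cmod z * cos (Arg z)" by (metis Re_rcis rcis_cmod_Arg)
  moreover have "0 < cos (Arg z)" using z assms by (intro cos_gt_zero_pi) auto
  ultimately show ?thesis using z by simp
qed

lemma sector_open:
  assumes "\<theta> \<le> pi/2"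
  shows "open (sector \<theta>)"
proof -
  let ?H = "{z. 0 < Re z}"
  have oH: "open ?H" by (simp add: open_halfspace_Re_gt)
  have cA: "continuous_on ?H Arg"
  proof (rule continuous_at_imp_continuous_on, clarify)
    fix z assume "0 < Re z"
    then have "z \<notin> \<real>\<^sub>\<le>\<^sub>0" by (auto simp: nonpos_Reals_def elim!: Reals_cases)
    then show "isCont Arg z" by (rule continuous_at_Arg)
  qed
  have "sector \<theta> = ?H \<inter> Arg -` {-\<theta><..<\<theta>}"
    using sector_Re_pos[OF _ assms] unfolding sector_def by (auto simp: abs_less_iff)
  moreover have "open (?H \<inter> Arg -` {-\<theta><..<\<theta>})"
    by (rule continuous_open_preimage[OF cA oH]) simp
  ultimately show ?thesis by simp
qed

lemma sector_connected:
  assumes "0 < \<theta>" "\<theta> \<le> pi/2"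
  shows "connected (sector \<theta>)"
proof -
  let ?f = "\<lambda>p::real \<times> real. of_real (fst p) * exp (\<i> * of_real (snd p))"
  let ?D = "{0::real<..} \<times> {-\<theta><..<\<theta>}"
  have "sector \<theta> = ?f ` ?D"
  proof
    show "sector \<theta> \<subseteq> ?f ` ?D"
    proof
      fix z assume "z \<in> sector \<theta>"
      then have z: "z \<noteq> 0" "\<bar>Arg z\<bar> < \<theta>" unfolding sector_def by auto
      have "z = ?f (cmod z, Arg z)" using Arg_eq[OF z(1)] by simp
      moreover have "(cmod z, Arg z) \<in> ?D" using z by auto
      ultimately show "z \<in> ?f ` ?D" by blast
    qed
  next
    show "?f ` ?D \<subseteq> sector \<theta>"
    proof
      fix z assume "z \<in> ?f ` ?D"
      then obtain r a where r: "r \<in> {0<..}" and a: "a \<in> {-\<theta><..<\<theta>}" and z: "z = ?f (r, a)" by auto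
      have "Arg (?f (r, a)) = a"
        by (rule Arg_unique[of r]) (use r a assms pi_gt_zero in auto)
      moreover have "?f (r, a) \<noteq> 0" using r by simp
      ultimately show "z \<in> sector \<theta>" using a z unfolding sector_def by auto
    qed
  qed
  moreover have "connected (?f ` ?D)"
  proof (rule connected_continuous_image)
    show "continuous_on ?D ?f" by (intro continuous_intros)
    show "connected ?D" by (intro convex_connected convex_Times) auto
  qed
  ultimately show ?thesis by simp
qed

lemma sector_pos_real:
  assumes "0 < \<theta>" "0 < t"
  shows "complex_of_real t \<in> sector \<theta>"
  using assms unfolding sector_def by auto


lemma bdd_opD:
  assumes "bdd_op T"
  shows "\<And>f. f \<in> fock2 \<Longrightarrow> T f \<in> fock2"
    and "\<And>f c. f \<in> fock2 \<Longrightarrow> T (\<lambda>z. c * f z) = (\<lambda>z. c * T f z)"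
    and "\<exists>C\<ge>0. \<forall>f\<in>fock2. fock_norm f \<le> 1 \<longrightarrow> fock_norm (T f) \<le> C"
proof -
  show "\<And>f. f \<in> fock2 \<Longrightarrow> T f \<in> fock2" using assms unfolding bdd_op_def by blast
  show "\<And>f c. f \<in> fock2 \<Longrightarrow> T (\<lambda>z. c * f z) = (\<lambda>z. c * T f z)" using assms unfolding bdd_op_def by blast
  obtain C where C: "\<forall>f\<in>fock2. fock_norm (T f) \<le> C * fock_norm f" using assms unfolding bdd_op_def by blast
  have "\<forall>f\<in>fock2. fock_norm f \<le> 1 \<longrightarrow> fock_norm (T f) \<le> max C 0"
  proof clarify
    fix f assume f: "f \<in> fock2" "fock_norm f \<le> 1"
    have "C * fock_norm f \<le> max C 0"
    proof (cases "C \<ge> 0")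
      case True then show ?thesis using f(2) fock_norm_nonneg[of f] by (simp add: mult_left_le max_def)
    next
      case False then show ?thesis using fock_norm_nonneg[of f] by (simp add: mult_nonpos_nonneg max_def)
    qed
    then show "fock_norm (T f) \<le> max C 0" using C f(1) by (meson order_trans)
  qed
  then show "\<exists>C\<ge>0. \<forall>f\<in>fock2. fock_norm f \<le> 1 \<longrightarrow> fock_norm (T f) \<le> C" by (intro exI[of _ "max C 0"]) auto
qed

lemma diff_op_bound:
  fixes h :: complex
  assumes T1: "bdd_op T1" and T2: "bdd_op T2" and D: "bdd_op D"
  defines "B \<equiv> (\<lambda>f z. T1 f z - T2 f z - h * D f z)"
  assumes g: "g \<in> fock2"
  shows "cmod (B g z) \<le> (4 * sqrt (pi * exp ((cmod z + 2)^2))) * (fock_norm g + 1) * op_norm B"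
proof -
  let ?K = "4 * sqrt (pi * exp ((cmod z + 2)^2))"
  define N where "N = fock_norm g"
  have N0: "0 \<le> N" unfolding N_def by (rule fock_norm_nonneg)
  define c where "c = 1 / (N + 1)"
  have c0: "0 < c" unfolding c_def using N0 by simp
  let ?g' = "\<lambda>z. complex_of_real c * g z"
  have g': "?g' \<in> fock2" by (rule fock2_scale(1)[OF g])
  have "fock_norm ?g' = c * N" using fock2_scale(2)[OF g, of "complex_of_real c"] c0 unfolding N_def by simp
  moreover have "c * N \<le> 1" unfolding c_def using N0 by (simp add: field_simps)
  ultimately have ng': "fock_norm ?g' \<le> 1" by simp
  have Bmem: "B f \<in> fock2" if "f \<in> fock2" for f
    unfolding B_def by (rule fock2_lin3(1)) (use that bdd_opD(1)[OF T1] bdd_opD(1)[OF T2] bdd_opD(1)[OF D] in auto)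
  obtain C1 where C1: "C1 \<ge> 0" "\<forall>f\<in>fock2. fock_norm f \<le> 1 \<longrightarrow> fock_norm (T1 f) \<le> C1" using bdd_opD(3)[OF T1] by blast
  obtain C2 where C2: "C2 \<ge> 0" "\<forall>f\<in>fock2. fock_norm f \<le> 1 \<longrightarrow> fock_norm (T2 f) \<le> C2" using bdd_opD(3)[OF T2] by blast
  obtain C3 where C3: "C3 \<ge> 0" "\<forall>f\<in>fock2. fock_norm f \<le> 1 \<longrightarrow> fock_norm (D f) \<le> C3" using bdd_opD(3)[OF D] by blast
  have bdd: "bdd_above ((\<lambda>f. fock_norm (B f)) ` {f\<in>fock2. fock_norm f \<le> 1})"
  proof (rule bdd_aboveI2)
    fix f assume "f \<in> {f\<in>fock2. fock_norm f \<le> 1}"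
    then have f: "f \<in> fock2" "fock_norm f \<le> 1" by auto
    have a: "fock_norm (T1 f) \<le> C1" "fock_norm (T2 f) \<le> C2" "fock_norm (D f) \<le> C3"
      using C1 C2 C3 f by auto
    have sq: "(fock_norm (T1 f))^2 \<le> C1^2" "(fock_norm (T2 f))^2 \<le> C2^2" "(fock_norm (D f))^2 \<le> C3^2"
      using a by (auto intro!: power_mono fock_norm_nonneg)
    have "(fock_norm (B f))^2 \<le> 3 * ((fock_norm (T1 f))^2 + (fock_norm (T2 f))^2 + (cmod h)^2 * (fock_norm (D f))^2)"
      unfolding B_def by (rule fock2_lin3(2)) (use f bdd_opD(1)[OF T1] bdd_opD(1)[OF T2] bdd_opD(1)[OF D] in auto)
    also have "\<dots> \<le> 3 * (C1^2 + C2^2 + (cmod h)^2 * C3^2)"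
      using sq by (intro mult_left_mono add_mono mult_left_mono) auto
    finally have "(fock_norm (B f))^2 \<le> 3 * (C1^2 + C2^2 + (cmod h)^2 * C3^2)" .
    then have "sqrt ((fock_norm (B f))^2) \<le> sqrt (3 * (C1^2 + C2^2 + (cmod h)^2 * C3^2))"
      by (rule real_sqrt_le_mono)
    then show "fock_norm (B f) \<le> sqrt (3 * (C1^2 + C2^2 + (cmod h)^2 * C3^2))"
      using fock_norm_nonneg[of "B f"] by simp
  qed
  have "fock_norm (B ?g') \<le> op_norm B"
    unfolding op_norm_def by (rule cSup_upper[OF _ bdd]) (use g' ng' in auto)
  moreover have "cmod (B ?g' z) \<le> ?K * fock_norm (B ?g')"
    by (rule point_eval[OF Bmem[OF g']])
  moreover have "B ?g' z = complex_of_real c * B g z"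
    unfolding B_def using bdd_opD(2)[OF T1 g] bdd_opD(2)[OF T2 g] bdd_opD(2)[OF D g]
    by (simp add: algebra_simps)
  ultimately have "c * cmod (B g z) \<le> ?K * op_norm B"
  proof -
    assume h1: "fock_norm (B ?g') \<le> op_norm B" and h2: "cmod (B ?g' z) \<le> ?K * fock_norm (B ?g')"
       and h3: "B ?g' z = complex_of_real c * B g z"
    have K0: "0 \<le> ?K" by simp
    have "?K * fock_norm (B ?g') \<le> ?K * op_norm B" using h1 K0 by (rule mult_left_mono)
    moreover have "cmod (B ?g' z) = c * cmod (B g z)" using h3 c0 by (simp add: norm_mult)
    ultimately show ?thesis using h2 by linarith
  qed
  then have "cmod (B g z) \<le> ?K * op_norm B / c" using c0 by (simp add: field_simps)
  also have "\<dots> = ?K * (N + 1) * op_norm B" unfolding c_def by simp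
  finally show ?thesis unfolding N_def .
qed


lemma T_deriv:
  assumes ext: "analytic_extension S \<theta> T" and th: "\<theta> \<le> pi/2"
    and xi: "\<xi> \<in> sector \<theta>" and g: "g \<in> fock2"
  shows "\<exists>d. ((\<lambda>\<zeta>. T \<zeta> g z) has_field_derivative d) (at \<xi>)"
proof -
  have bddT: "\<forall>\<xi>\<in>sector \<theta>. bdd_op (T \<xi>)" and an: "op_analytic_on T (sector \<theta>)"
    using ext unfolding analytic_extension_def by auto
  obtain D where D: "bdd_op D"
    and lim: "((\<lambda>h. op_norm (\<lambda>f z. T (\<xi> + h) f z - T \<xi> f z - h * D f z) / cmod h) \<longlongrightarrow> 0) (at 0)"
    using an xi unfolding op_analytic_on_def by blast
  let ?K = "4 * sqrt (pi * exp ((cmod z + 2)^2))"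
  let ?M = "\<lambda>h. ?K * (fock_norm g + 1) * (op_norm (\<lambda>f z. T (\<xi> + h) f z - T \<xi> f z - h * D f z) / cmod h)"
  have op: "open (sector \<theta>)" by (rule sector_open[OF th])
  obtain e where e: "e > 0" "ball \<xi> e \<subseteq> sector \<theta>" using op xi open_contains_ball by blast
  have b2: "bdd_op (T \<xi>)" using bddT xi by auto
  have ev: "eventually (\<lambda>h. cmod ((T (\<xi> + h) g z - T \<xi> g z) / h - D g z) \<le> ?M h) (at 0)"
    unfolding eventually_at
  proof (intro exI[of _ e] conjI ballI impI)
    show "0 < e" by fact
    fix h :: complex assume "h \<noteq> 0 \<and> dist h 0 < e"
    then have h: "h \<noteq> 0" "cmod h < e" by auto
    have "\<xi> + h \<in> ball \<xi> e" using h by (simp add: dist_norm)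
    then have "\<xi> + h \<in> sector \<theta>" using e by auto
    then have b1: "bdd_op (T (\<xi> + h))" using bddT by auto
    have X: "cmod (T (\<xi> + h) g z - T \<xi> g z - h * D g z) \<le> ?K * (fock_norm g + 1) * op_norm (\<lambda>f z. T (\<xi> + h) f z - T \<xi> f z - h * D f z)"
      using diff_op_bound[OF b1 b2 D g, of z h] by simp
    have eq: "(T (\<xi> + h) g z - T \<xi> g z) / h - D g z = (T (\<xi> + h) g z - T \<xi> g z - h * D g z) / h"
      using h by (simp add: field_simps)
    have "cmod ((T (\<xi> + h) g z - T \<xi> g z) / h - D g z) = cmod (T (\<xi> + h) g z - T \<xi> g z - h * D g z) / cmod h"
      unfolding eq by (simp add: norm_divide)
    also have "\<dots> \<le> ?K * (fock_norm g + 1) * op_norm (\<lambda>f z. T (\<xi> + h) f z - T \<xi> f z - h * D f z) / cmod h"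
      using X by (rule divide_right_mono) simp
    also have "\<dots> = ?M h" by simp
    finally show "cmod ((T (\<xi> + h) g z - T \<xi> g z) / h - D g z) \<le> ?M h" .
  qed
  have "(?M \<longlongrightarrow> ?K * (fock_norm g + 1) * 0) (at 0)"
    by (rule tendsto_mult[OF tendsto_const lim])
  then have "(?M \<longlongrightarrow> 0) (at 0)" by simp
  then have "((\<lambda>h. (T (\<xi> + h) g z - T \<xi> g z) / h - D g z) \<longlongrightarrow> 0) (at 0)"
    by (rule Lim_null_comparison[OF ev])
  then have "((\<lambda>h. (T (\<xi> + h) g z - T \<xi> g z) / h) \<longlongrightarrow> D g z) (at 0)"
    by (rule LIM_zero_cancel)
  then show ?thesis unfolding DERIV_def by blast
qed

lemma T_holo:
  assumes ext: "analytic_extension S \<theta> T" and th: "\<theta> \<le> pi/2" and g: "g \<in> fock2"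
  shows "(\<lambda>\<zeta>. T \<zeta> g z) holomorphic_on sector \<theta>"
  using T_deriv[OF ext th _ g] sector_open[OF th] by (simp add: holomorphic_on_open)

theorem lemma2p9:
  fixes S :: "real \<Rightarrow> op" and T :: "complex \<Rightarrow> op" and \<theta> :: real
  assumes "comp_semigroup S"
    and "0 < \<theta>" and "\<theta> < pi / 2"
    and "analytic_extension S \<theta> T"
  shows "\<forall>\<xi>\<in>sector \<theta>. is_comp_op (T \<xi>)"
proof
  fix \<xi> assume xi: "\<xi> \<in> sector \<theta>"
  have th: "\<theta> \<le> pi/2" using assms(3) by simp
  have bddT: "\<forall>\<xi>\<in>sector \<theta>. bdd_op (T \<xi>)" and realT: "\<forall>t>0. \<forall>f\<in>fock2. T (complex_of_real t) f = S t f"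
    using assms(4) unfolding analytic_extension_def by auto
  have compS: "\<forall>t\<ge>0. is_comp_op (S t)" using assms(1) unfolding comp_semigroup_def by auto
  define \<phi> where "\<phi> = T \<xi> (\<lambda>z. z)"
  have "\<phi> \<in> fock2" unfolding \<phi>_def using bdd_opD(1)[of "T \<xi>"] bddT xi id_fock2 by auto
  then have h\<phi>: "\<phi> holomorphic_on UNIV" by (rule fock2_D(1))
  have "\<forall>f\<in>fock2. T \<xi> f = f \<circ> \<phi>"
  proof
    fix f assume f: "f \<in> fock2"
    have hf: "f holomorphic_on UNIV" using fock2_D(1)[OF f] .
    show "T \<xi> f = f \<circ> \<phi>"
    proof
      fix z
      define G where "G = (\<lambda>\<zeta>. T \<zeta> f z - f (T \<zeta> (\<lambda>z. z) z))"
      have hol: "G holomorphic_on sector \<theta>"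
      proof -
        have h1: "(\<lambda>\<zeta>. T \<zeta> f z) holomorphic_on sector \<theta>" by (rule T_holo[OF assms(4) th f])
        have h2: "(\<lambda>\<zeta>. T \<zeta> (\<lambda>z. z) z) holomorphic_on sector \<theta>" by (rule T_holo[OF assms(4) th id_fock2])
        have h3: "(\<lambda>\<zeta>. f (T \<zeta> (\<lambda>z. z) z)) holomorphic_on sector \<theta>"
          using holomorphic_on_compose[OF h2 holomorphic_on_subset[OF hf]] by (simp add: o_def)
        show ?thesis unfolding G_def using h1 h3 by (rule holomorphic_on_diff)
      qed
      have zero: "G w = 0" if "w \<in> complex_of_real ` {0<..}" for w
      proof -
        from that obtain t where t0: "t \<in> {0<..}" and tw: "w = complex_of_real t" by (rule imageE)
        have t: "t > 0" "w = complex_of_real t" using t0 tw by auto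
        have "is_comp_op (S t)" using compS t(1) by simp
        then obtain \<psi> where \<psi>: "\<forall>f\<in>fock2. S t f = f \<circ> \<psi>" unfolding is_comp_op_def by blast
        have "T w f = f \<circ> \<psi>" using realT t \<psi> f by auto
        moreover have "T w (\<lambda>z. z) = \<psi>" using realT t \<psi> id_fock2 by (auto simp: o_def)
        ultimately show ?thesis unfolding G_def by simp
      qed
      have lp: "1 islimpt complex_of_real ` {0<..}"
        unfolding islimpt_approachable
      proof (intro allI impI)
        fix e :: real assume e: "0 < e"
        have m: "complex_of_real (1 + e/2) \<in> complex_of_real ` {0<..}" using e by (intro imageI) simp
        have "complex_of_real (1 + e/2) - 1 = complex_of_real (e/2)" by simp
        then have d: "dist (complex_of_real (1 + e/2)) 1 = e/2"
          using e unfolding dist_norm by (simp only: norm_of_real)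
        have n1: "complex_of_real (1 + e/2) \<noteq> 1"
        proof
          assume "complex_of_real (1 + e/2) = 1"
          then have "1 + e/2 = 1" using of_real_eq_1_iff by blast
          then show False using e by simp
        qed
        have "complex_of_real (1 + e/2) \<noteq> 1 \<and> dist (complex_of_real (1 + e/2)) 1 < e"
          using e d n1 by simp
        then show "\<exists>x'\<in>complex_of_real ` {0<..}. x' \<noteq> 1 \<and> dist x' 1 < e" using m by blast
      qed
      have "G \<xi> = 0"
      proof (rule analytic_continuation[of G "sector \<theta>" "complex_of_real ` {0<..}" 1 \<xi>])
        show "G holomorphic_on sector \<theta>" by (rule hol)
        show "open (sector \<theta>)" by (rule sector_open[OF th])
        show "connected (sector \<theta>)" by (rule sector_connected[OF assms(2) th])
        show "complex_of_real ` {0<..} \<subseteq> sector \<theta>" using sector_pos_real[OF assms(2)] by auto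
        show "1 \<in> sector \<theta>" using sector_pos_real[OF assms(2), of 1] by simp
        show "1 islimpt complex_of_real ` {0<..}" by (rule lp)
        show "\<And>w. w \<in> complex_of_real ` {0<..} \<Longrightarrow> G w = 0" by (rule zero)
        show "\<xi> \<in> sector \<theta>" by (rule xi)
      qed
      then show "T \<xi> f z = (f \<circ> \<phi>) z" unfolding G_def \<phi>_def by simp
    qed
  qed
  then show "is_comp_op (T \<xi>)" unfolding is_comp_op_def using h\<phi> by blast
qed


end
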